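(* Let $p$ be an odd prime, $q$ a power of $p$, and $n\ge 0$ an integer. Let $V=\{y\in\mathbb{F}_{q^2}: y^q=1-y\}$ and $S=(\mathbb{F}_q\cup V)\setminus\{\tfrac12\}$. Then $F_n(1,x)$ is a permutation polynomial of $\mathbb{F}_q$ if and only if the map $g:S\to\mathbb{F}_{q^2}$, $g(y)=\dfrac{y^n-(1-y)^n}{2y-1}$, is 2-to-1 (every element of $g(S)$ has exactly two preimages in $S$) and $g(y)\neq \dfrac{n}{2^{n-1}}$ for every $y\in S$.
   Context: For an integer $n\ge 1$, the $n$-th reversed Dickson polynomial of the third kind is $F_n(a,x)=\sum_{i=0}^{\lfloor n/2\rfloor}\frac{n-2i}{n-i}\binom{n-i}{i}(-x)^i a^{n-2i}$, where each coefficient $\frac{n-2i}{n-i}\binom{n-i}{i}$ is an integer (read in $\mathbb{F}_q$), and $F_0(a,x)=0$. A polynomial $f\in\mathbb{F}_q[x]$ is a permutation polynomial of $\mathbb{F}_q$ if $c\mapsto f(c)$ is a bijection of $\mathbb{F}_q$. *)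

theory Defs
  imports "HOL-Computational_Algebra.Primes"
begin

text \<open>Integer coefficient (n-2i)/(n-i) * binom(n-i,i) of the reversed Dickson polynomial
  of the third kind (an integer for i \<le> n/2, n \<ge> 1); computed exactly as a quotient of naturals.\<close>
definition rdickson3_coeff :: "nat \<Rightarrow> nat \<Rightarrow> nat" where
  "rdickson3_coeff n i = ((n - 2*i) * ((n - i) choose i)) div (n - i)"

definition rdickson3 :: "nat \<Rightarrow> 'a::comm_ring_1 \<Rightarrow> 'a \<Rightarrow> 'a" where
  "rdickson3 n a x = (if n = 0 then 0 else
     (\<Sum>i\<le>n div 2. of_nat (rdickson3_coeff n i) * (-x)^i * a^(n - 2*i)))"

definition subfield_Fq :: "nat \<Rightarrow> 'a::field set" where
  "subfield_Fq q = {c. c^q = c}"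

definition setV :: "nat \<Rightarrow> 'a::field set" where
  "setV q = {y. y^q = 1 - y}"

definition setS :: "nat \<Rightarrow> 'a::field set" where
  "setS q = (subfield_Fq q \<union> setV q) - {1/2}"

definition gmap :: "nat \<Rightarrow> 'a::field \<Rightarrow> 'a" where
  "gmap n y = (y^n - (1 - y)^n) / (2*y - 1)"

end

theory Submission
  imports Defs "HOL-Number_Theory.Residues" "HOL-Computational_Algebra.Polynomial"
begin


lemma coeff_nat:
  assumes "0 < i" "2*i \<le> n"
  shows "rdickson3_coeff n i = ((n-i) choose i) - ((n-i-1) choose (i-1))
         \<and> ((n-i-1) choose (i-1)) \<le> ((n-i) choose i)"
proof -
  define m where "m = n - i"
  have "m > 0" using assms unfolding m_def by simp
  then obtain m' where m': "m = Suc m'" using gr0_implies_Suc by blast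
  obtain i' where i': "i = Suc i'" using assms by (cases i) auto
  have mi: "m \<ge> i" using assms unfolding m_def by simp
  have key: "m * ((m-1) choose (i-1)) = (m choose i) * i"
    using Suc_times_binomial_eq[of m' i'] m' i' by simp
  have le: "((m-1) choose (i-1)) \<le> (m choose i)"
  proof -
    have "m * ((m-1) choose (i-1)) \<le> m * (m choose i)" using key mi
      by (metis mult.commute mult_le_mono2)
    thus ?thesis by (metis m' mult_le_cancel1 zero_less_Suc)
  qed
  have "(n - 2*i) * (m choose i) = m * ((m choose i) - ((m-1) choose (i-1)))"
  proof -
    have "(n - 2*i) * (m choose i) = m * (m choose i) - i * (m choose i)"
      using assms unfolding m_def by (simp add: diff_mult_distrib)
    also have "\<dots> = m * (m choose i) - m * ((m-1) choose (i-1))" using key by (simp add: mult.commute)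
    also have "\<dots> = m * ((m choose i) - ((m-1) choose (i-1)))" by (simp add: diff_mult_distrib2)
    finally show ?thesis .
  qed
  hence "rdickson3_coeff n i = (m * ((m choose i) - ((m-1) choose (i-1)))) div m"
    unfolding rdickson3_coeff_def m_def by simp
  also have "\<dots> = (m choose i) - ((m-1) choose (i-1))" by (rule nonzero_mult_div_cancel_left) (simp add: m')
  finally show ?thesis using le unfolding m_def by (simp add: diff_diff_add)
qed

lemma coeff_zero: "n \<le> 2*i \<Longrightarrow> rdickson3_coeff n i = 0"
  unfolding rdickson3_coeff_def by simp

lemma coeff_zero': "n div 2 < i \<Longrightarrow> rdickson3_coeff n i = 0"
  by (intro coeff_zero) presburger

lemma coeff_0: "rdickson3_coeff n 0 = (if n = 0 then 0 else 1)"
  unfolding rdickson3_coeff_def by simp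

lemma coeff_int:
  "int (rdickson3_coeff n i) = (if 2*i \<le> n \<and> 0 < n then int ((n-i) choose i)
      - (if i = 0 then 0 else int ((n-i-1) choose (i-1))) else 0)"
proof (cases "i = 0")
  case True thus ?thesis by (simp add: coeff_0)
next
  case False
  show ?thesis
  proof (cases "2*i \<le> n")
    case True
    with coeff_nat[of i n] False show ?thesis by (auto simp: of_nat_diff)
  next
    case F: False
    thus ?thesis using coeff_zero[of n i] by auto
  qed
qed

lemma coeff_rec:
  "rdickson3_coeff (n+2) (i+1) = rdickson3_coeff (n+1) (i+1) + rdickson3_coeff n i"
proof -
  have "int (rdickson3_coeff (n+2) (i+1)) = int (rdickson3_coeff (n+1) (i+1)) + int (rdickson3_coeff n i)"
  proof (cases "2*i \<le> n")
    case False thus ?thesis by (simp add: coeff_int)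
  next
    case True
    have P1: "(n+1-i) choose (i+1) = ((n-i) choose (i+1)) + ((n-i) choose i)"
      using True by (simp add: Suc_diff_le)
    show ?thesis
    proof (cases "2*i+1 \<le> n")
      case True2: True
      have P2: "((n-i) choose i) = ((n-i-1) choose i) + (if i = 0 then 0 else ((n-i-1) choose (i-1)))"
      proof (cases i)
        case 0 thus ?thesis by simp
      next
        case (Suc j)
        have "n - i = Suc (n-i-1)" using True2 by simp
        then show ?thesis using Suc binomial_Suc_Suc[of "n-i-1" j] by simp
      qed
      show ?thesis using True True2 P1 P2 by (simp add: coeff_int)
    next
      case False
      hence ni: "n = 2*i" using True by simp
      show ?thesis
      proof (cases "i = 0")
        case True thus ?thesis using ni by (simp add: coeff_int)
      next
        case False
        have a: "n + 2 - (i+1) = i + 1" "n - i = i" "n - i - 1 = i - 1" using ni by auto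
        show ?thesis using ni False by (simp add: coeff_int a)
      qed
    qed
  qed
  thus ?thesis by linarith
qed

lemma coeff_rec': "rdickson3_coeff (Suc (Suc n)) (Suc i) = rdickson3_coeff (Suc n) (Suc i) + rdickson3_coeff n i"
  using coeff_rec[of n i] by simp

definition R :: "nat \<Rightarrow> 'a::comm_ring_1 \<Rightarrow> 'a" where
  "R n x = (\<Sum>i\<le>n. of_nat (rdickson3_coeff n i) * (-x)^i)"

lemma R_ext: "n \<le> m \<Longrightarrow> R n x = (\<Sum>i\<le>m. of_nat (rdickson3_coeff n i) * (-x)^i)"
  unfolding R_def by (intro sum.mono_neutral_left) (auto simp: coeff_zero)

lemma rd_R: "rdickson3 n 1 x = R n x"
proof (cases "n = 0")
  case True thus ?thesis by (simp add: rdickson3_def R_def coeff_zero)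
next
  case False
  have "rdickson3 n 1 x = (\<Sum>i\<le>n div 2. of_nat (rdickson3_coeff n i) * (-x)^i)"
    using False by (simp add: rdickson3_def)
  also have "\<dots> = R n x" unfolding R_def
    by (intro sum.mono_neutral_left) (auto simp: coeff_zero' not_le[symmetric])
  finally show ?thesis .
qed

lemma R_0: "R 0 x = 0" by (simp add: R_def coeff_zero)
lemma R_1: "R (Suc 0) x = 1" by (simp add: R_def coeff_0 coeff_zero)

lemma R_rec: "R (Suc (Suc n)) x = R (Suc n) x - x * R n x"
proof -
  let ?t = "-x"
  have "R (Suc (Suc n)) x = (\<Sum>i\<le>Suc (Suc n). of_nat (rdickson3_coeff (Suc (Suc n)) i) * ?t^i)"
    by (simp add: R_def)
  also have "\<dots> = 1 + (\<Sum>i\<le>Suc n. of_nat (rdickson3_coeff (Suc (Suc n)) (Suc i)) * ?t^(Suc i))"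
    by (subst sum.atMost_Suc_shift) (simp add: coeff_0)
  also have "(\<Sum>i\<le>Suc n. of_nat (rdickson3_coeff (Suc (Suc n)) (Suc i)) * ?t^(Suc i))
     = (\<Sum>i\<le>Suc n. of_nat (rdickson3_coeff (Suc n) (Suc i)) * ?t^(Suc i) + ?t * (of_nat (rdickson3_coeff n i) * ?t^i))"
    by (intro sum.cong refl) (simp add: coeff_rec' algebra_simps)
  also have "\<dots> = (\<Sum>i\<le>Suc n. of_nat (rdickson3_coeff (Suc n) (Suc i)) * ?t^(Suc i)) + ?t * (\<Sum>i\<le>Suc n. of_nat (rdickson3_coeff n i) * ?t^i)"
    by (simp only: sum.distrib sum_distrib_left)
  also have "(\<Sum>i\<le>Suc n. of_nat (rdickson3_coeff n i) * ?t^i) = R n x"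
    by (rule R_ext[symmetric]) simp
  also have "1 + ((\<Sum>i\<le>Suc n. of_nat (rdickson3_coeff (Suc n) (Suc i)) * ?t^(Suc i)) + ?t * R n x)
     = (1 + (\<Sum>i\<le>Suc n. of_nat (rdickson3_coeff (Suc n) (Suc i)) * ?t^(Suc i))) - x * R n x"
    by simp
  also have "1 + (\<Sum>i\<le>Suc n. of_nat (rdickson3_coeff (Suc n) (Suc i)) * ?t^(Suc i)) = R (Suc n) x"
    unfolding R_def by (subst (2) sum.atMost_Suc_shift) (simp add: coeff_0 coeff_zero)
  finally show ?thesis .
qed

lemma R_rec_mult: "R (Suc (Suc j)) X * c = R (Suc j) X * c - X * (R j X * c)"
  by (simp add: R_rec algebra_simps)

lemma R_g: "R n (y*(1-y)) * (2*y-1) = y^n - (1-y)^n"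
proof (induction n rule: nat_less_induct)
  case (1 n)
  show ?case
  proof (cases n)
    case 0 thus ?thesis by (simp add: R_0)
  next
    case (Suc m)
    show ?thesis
    proof (cases m)
      case 0 thus ?thesis using Suc by (simp add: R_1)
    next
      case (Suc j)
      have n: "n = Suc (Suc j)" using Suc \<open>n = Suc m\<close> by simp
      have h1: "R (Suc j) (y*(1-y)) * (2*y-1) = y^(Suc j) - (1-y)^(Suc j)" using 1 n by (metis lessI)
      have h0: "R j (y*(1-y)) * (2*y-1) = y^j - (1-y)^j" using 1 n by (metis lessI less_SucI)
      have "R n (y*(1-y)) * (2*y-1) = (y^(Suc j) - (1-y)^(Suc j)) - y*(1-y) * (y^j - (1-y)^j)"
        unfolding n R_rec_mult h1 h0 ..
      also have "\<dots> = y^n - (1-y)^n" unfolding n by (simp add: algebra_simps power_Suc)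
      finally show ?thesis .
    qed
  qed
qed

lemma R_quarter:
  fixes x :: "'a::comm_ring_1"
  assumes x4: "4 * x = 1"
  shows "R n x * 2^n = 2 * of_nat n"
proof (induction n rule: nat_less_induct)
  case (1 n)
  show ?case
  proof (cases n)
    case 0 thus ?thesis by (simp add: R_0)
  next
    case (Suc m)
    show ?thesis
    proof (cases m)
      case 0 thus ?thesis using Suc by (simp add: R_1)
    next
      case (Suc j)
      have n: "n = Suc (Suc j)" using Suc \<open>n = Suc m\<close> by simp
      have h1: "R (Suc j) x * 2^(Suc j) = 2 * of_nat (Suc j)" using 1 n by (metis lessI)
      have h0: "R j x * 2^j = 2 * of_nat j" using 1 n by (metis lessI less_SucI)
      have "R n x * 2^n = 2 * (R (Suc j) x * 2^(Suc j)) - (R j x * 2^j) * (4 * x)"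
        unfolding n R_rec_mult by (simp add: algebra_simps)
      also have "\<dots> = 2 * (2 * of_nat (Suc j)) - 2 * of_nat j" unfolding h1 h0 x4 by simp
      finally show ?thesis unfolding n by (simp add: algebra_simps)
    qed
  qed
qed



lemma fermat_fin:
  fixes x :: "'a::{field,finite}"
  shows "x ^ card (UNIV :: 'a set) = x"
proof (cases "x = 0")
  case False
  have "x * (\<Prod>y\<in>UNIV-{0}. x * y) = x * x ^ (card (UNIV :: 'a set) - 1) * \<Prod>(UNIV-{0})"
    by (simp add: prod.distrib mult_ac)
  also have "x * x ^ (card (UNIV :: 'a set) - 1) = x ^ Suc (card (UNIV :: 'a set) - 1)"
    by (subst power_Suc) auto
  also have "Suc (card (UNIV :: 'a set) - 1) = card (UNIV :: 'a set)"
    using finite_UNIV_card_ge_0[where ?'a = 'a] by simp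
  also have "(\<Prod>y\<in>UNIV-{0}. x * y) = (\<Prod>y\<in>UNIV-{0}. y)"
    by (rule prod.reindex_bij_witness[of _ "\<lambda>y. y / x" "\<lambda>y. x * y"]) (use False in auto)
  finally show ?thesis
    by simp
qed (use finite_UNIV_card_ge_0[where ?'a = 'a] in auto)

context
  fixes p q k :: nat
  assumes pr: "prime p" and op: "odd p" and k1: "k \<ge> 1" and qdef: "q = p ^ k"
    and cardA: "card (UNIV::'a::{field,finite} set) = q ^ 2"
begin

lemma CHAR_p: "CHAR('a) = p"
proof -
  have fin: "finite (UNIV :: 'a set)" by simp
  have pos: "CHAR('a) > 0" using finite_imp_CHAR_pos[OF fin] .
  have prC: "prime CHAR('a)" using prime_CHAR_semidom[OF pos] .
  have "CHAR('a) dvd p ^ (2*k)" using CHAR_dvd_CARD[where 'a='a] cardA qdef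
    by (simp add: power_mult[symmetric] mult.commute)
  hence "CHAR('a) dvd p" using prC prime_dvd_power by blast
  thus ?thesis using prC pr by (simp add: primes_dvd_imp_eq)
qed

lemma primeC: "prime CHAR('a)" using CHAR_p pr by simp

lemma two_ne: "(2::'a) \<noteq> 0"
proof
  assume "(2::'a) = 0"
  hence "(of_nat 2 :: 'a) = 0" by simp
  hence "p dvd 2" using of_nat_eq_0_iff_char_dvd[where 'a='a] CHAR_p by metis
  hence "p \<le> 2" by (simp add: dvd_imp_le)
  moreover have "p \<ge> 2" using pr prime_ge_2_nat by blast
  ultimately show False using op by simp
qed

lemma four_ne: "(4::'a) \<noteq> 0"
proof -
  have "(4::'a) = 2 * 2" by simp
  with two_ne show ?thesis by (metis mult_eq_0_iff)
qed

lemma odd_q: "odd q" using op qdef by simp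
lemma q_pos: "q > 0" using pr qdef prime_gt_0_nat by simp
lemma q_ge3: "q \<ge> 3"
proof -
  have "p \<ge> 2" using pr prime_ge_2_nat by blast
  hence "p \<ge> 3" using op by presburger
  moreover have "p \<le> q" unfolding qdef using k1 \<open>p \<ge> 3\<close> by (intro self_le_power) auto
  ultimately show ?thesis by simp
qed

lemma frob_add: "((x::'a) + y)^q = x^q + y^q"
  using freshmans_dream'[OF primeC, of q k] CHAR_p qdef by simp

lemma frob_sum: "(sum (f::'b \<Rightarrow> 'a) A)^q = sum (\<lambda>i. f i ^ q) A"
  using freshmans_dream_sum'[OF primeC, of q k] CHAR_p qdef by simp

lemma frob_neg: "(-(x::'a))^q = - (x^q)" using odd_q by simp

lemma frob_one_minus: "(1 - (y::'a))^q = 1 - y^q"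
proof -
  have "(1 - y)^q = (1 + (-y))^q" by simp
  also have "\<dots> = 1 - y^q" by (simp only: frob_add frob_neg) simp
  finally show ?thesis .
qed

lemma frob_of_nat: "(of_nat m :: 'a)^q = of_nat m"
proof (induction m)
  case 0 thus ?case using q_pos by simp
next
  case (Suc m)
  have "(of_nat (Suc m) :: 'a)^q = (1 + of_nat m)^q" by simp
  also have "\<dots> = of_nat (Suc m)" by (simp only: frob_add Suc) simp
  finally show ?case .
qed

lemma R_frob: "(R n (x::'a))^q = R n (x^q)"
  unfolding R_def frob_sum
  by (simp add: power_mult_distrib frob_of_nat power_mult[symmetric] mult.commute[of _ q])
     (simp add: power_mult frob_neg)

lemma Fq_iff: "x \<in> subfield_Fq q \<longleftrightarrow> (x::'a)^q = x" by (simp add: subfield_Fq_def)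

lemma quarter_Fq: "(1/4::'a) \<in> subfield_Fq q"
proof -
  have "(4::'a)^q = 4" using frob_of_nat[of 4] by simp
  thus ?thesis by (simp add: Fq_iff power_divide)
qed

lemma sqrt_ex:
  assumes d: "(d::'a) \<in> subfield_Fq q"
  shows "\<exists>s. s * s = d"
proof -
  obtain r where r: "q = 2*r+1" using odd_q oddE by blast
  define N where "N = q^2"
  define M where "M = 2*r*r + 2*r + 1"
  have NM: "N + 1 = 2 * M" unfolding N_def M_def r by (simp add: power2_eq_square algebra_simps)
  have M2: "M \<ge> 2" using q_ge3 r unfolding M_def by (cases r) auto
  define Sq where "Sq = (\<lambda>s::'a. s*s) ` UNIV"
  define Rt where "Rt = {x::'a. x^M = x}"
  have SqRt: "Sq \<subseteq> Rt"
  proof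
    fix z assume "z \<in> Sq"
    then obtain s where z: "z = s*s" unfolding Sq_def by auto
    have "z^M = s^(2*M)" unfolding z by (simp add: power_mult power2_eq_square power_mult_distrib)
    also have "\<dots> = s^N * s" unfolding NM[symmetric] by simp
    also have "s^N = s" unfolding N_def using fermat_fin[of s] cardA by simp
    finally show "z \<in> Rt" unfolding Rt_def z by simp
  qed
  define P where "P = (monom (1::'a) M - [:0,1:])"
  have polyP: "poly P x = x^M - x" for x unfolding P_def by (simp add: poly_monom)
  obtain m2 where m2: "M = Suc (Suc m2)" using M2 by (metis add_2_eq_Suc le_Suc_ex)
  have c01: "coeff [:0::'a,1:] M = 0" unfolding m2 by simp
  have coeffP: "coeff P M = 1" unfolding P_def coeff_diff c01 by simp
  have P0: "P \<noteq> 0" using coeffP by auto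
  have degP: "degree P \<le> M" unfolding P_def
    by (rule degree_diff_le) (use M2 degree_monom_le in auto)
  have "Rt = {x. poly P x = 0}" unfolding Rt_def polyP by simp
  hence cRt: "card Rt \<le> M" using card_poly_roots_bound[OF P0] degP by simp
  have cSq: "N \<le> 2 * card Sq - 1"
  proof -
    have U: "UNIV = (\<Union>z\<in>Sq. {s::'a. s*s = z})" unfolding Sq_def by auto
    have "N = card (\<Union>z\<in>Sq. {s::'a. s*s = z})" using cardA N_def U by simp
    also have "\<dots> \<le> (\<Sum>z\<in>Sq. card {s::'a. s*s = z})" by (rule card_UN_le) simp
    also have "\<dots> \<le> (\<Sum>z\<in>Sq. if z = 0 then 1 else 2)"
    proof (rule sum_mono)
      fix z assume "z \<in> Sq"
      then obtain t where z: "z = t*t" unfolding Sq_def by auto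
      have sub: "{s::'a. s*s = z} \<subseteq> {t, -t}"
      proof
        fix s assume "s \<in> {s. s*s = z}"
        hence "(s - t) * (s + t) = 0" unfolding z by (simp add: algebra_simps)
        thus "s \<in> {t, -t}" by (auto simp: eq_neg_iff_add_eq_0)
      qed
      show "card {s::'a. s*s = z} \<le> (if z = 0 then 1 else 2)"
      proof (cases "z = 0")
        case True
        hence "{s::'a. s*s = z} = {0}" by auto
        thus ?thesis using True by simp
      next
        case False
        have "card {s::'a. s*s = z} \<le> card {t, -t}" by (rule card_mono) (use sub in auto)
        also have "\<dots> \<le> 2" by (simp add: card_insert_le_m1)
        finally show ?thesis using False by simp
      qed
    qed
    also have "\<dots> = 2 * card Sq - 1"
    proof -
      have z: "(0::'a) \<in> Sq" unfolding Sq_def by auto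
      have f: "finite Sq" by simp
      have "(\<Sum>z\<in>Sq. if z = 0 then 1 else 2) = (if (0::'a) = 0 then 1 else 2) + (\<Sum>z\<in>Sq-{0}. if z = 0 then 1 else (2::nat))"
        by (rule sum.remove[OF f z])
      also have "(if (0::'a) = 0 then 1 else 2) = (1::nat)" by simp
      also have "(\<Sum>z\<in>Sq-{0}. if z = 0 then 1 else (2::nat)) = (\<Sum>z\<in>Sq-{0}. 2)"
        by (intro sum.cong) auto
      also have "\<dots> = 2 * (card Sq - 1)" using z f by simp
      finally show ?thesis using z f by (cases "card Sq") (auto simp: card_gt_0_iff)
    qed
    finally show ?thesis .
  qed
  have fRt: "finite Rt" by simp
  have "card Rt \<le> card Sq" using cRt cSq NM by linarith
  hence "Sq = Rt" using card_seteq[OF fRt SqRt] by blast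
  moreover have "d \<in> Rt"
  proof (cases "d = 0")
    case True thus ?thesis unfolding Rt_def using M2 by simp
  next
    case False
    have dq: "d^q = d" using d Fq_iff by simp
    have "d^q = d * d^(q-1)" using q_pos by (cases q) auto
    hence "d * d^(q-1) = d * 1" using dq by simp
    hence d1: "d^(q-1) = 1" using False by simp
    have "M = 1 + (q-1) * (r+1)" unfolding M_def r by (simp add: algebra_simps)
    hence "d^M = d * (d^(q-1))^(r+1)" by (simp add: power_add power_mult)
    thus ?thesis unfolding Rt_def using d1 by simp
  qed
  ultimately show ?thesis unfolding Sq_def by auto
qed


lemma half_ne: "y \<noteq> 1/2 \<longleftrightarrow> 2*y - 1 \<noteq> (0::'a)"
  using two_ne by (auto simp: field_simps)

lemma h_quarter: "y*(1-y) = (1/4::'a) \<longleftrightarrow> y = 1/2"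
proof -
  have "y*(1-y) = (1/4::'a) \<longleftrightarrow> (2*y-1)*(2*y-1) = 0"
    using four_ne by (auto simp: field_simps)
  also have "\<dots> \<longleftrightarrow> y = 1/2" using half_ne by auto
  finally show ?thesis .
qed

lemma S_h: assumes "y \<in> setS q" shows "y*(1-y) \<in> subfield_Fq q" "y*(1-y) \<noteq> (1/4::'a)"
proof -
  have y: "y^q = y \<or> y^q = 1 - y" "y \<noteq> 1/2" using assms
    by (auto simp: setS_def subfield_Fq_def setV_def)
  have "(y*(1-y))^q = y^q * (1 - y^q)" by (simp add: power_mult_distrib frob_one_minus)
  also have "\<dots> = y*(1-y)"
  proof (cases "y^q = y")
    case True thus ?thesis by simp
  next
    case False
    hence h: "y^q = 1 - y" using y(1) by simp
    have "y^q * (1 - y^q) = (1-y)*(1-(1-y))" by (simp only: h)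
    also have "\<dots> = y*(1-y)" by simp
    finally show ?thesis .
  qed
  finally show "y*(1-y) \<in> subfield_Fq q" by (simp add: Fq_iff)
  show "y*(1-y) \<noteq> (1/4::'a)" using h_quarter y(2) by simp
qed

lemma h_eq: "y*(1-y) = y'*(1-y') \<Longrightarrow> y' = y \<or> y' = 1 - (y::'a)"
proof -
  assume "y*(1-y) = y'*(1-y')"
  hence "(y' - y) * (y' - (1 - y)) = 0" by (simp add: algebra_simps)
  thus ?thesis by auto
qed

lemma S_flip: assumes "y \<in> setS q" shows "1 - y \<in> setS q" "1 - y \<noteq> (y::'a)"
proof -
  have y: "y^q = y \<or> y^q = 1 - y" "y \<noteq> 1/2" using assms
    by (auto simp: setS_def subfield_Fq_def setV_def)
  have "(1-y)^q = 1 - y^q" by (rule frob_one_minus)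
  moreover have "1 - y \<noteq> 1/2" using y(2) two_ne by (auto simp: field_simps)
  ultimately show "1 - y \<in> setS q" using y(1)
    by (auto simp: setS_def subfield_Fq_def setV_def)
  show "1 - y \<noteq> y" using y(2) two_ne by (auto simp: field_simps)
qed

lemma h_surj:
  assumes c: "c \<in> subfield_Fq q" "c \<noteq> (1/4::'a)"
  shows "\<exists>y\<in>setS q. y*(1-y) = c"
proof -
  have cq: "c^q = c" using c Fq_iff by simp
  have "(1 - 4*c)^q = 1 - 4*c" using frob_of_nat[of 4] cq
    by (simp add: frob_one_minus power_mult_distrib)
  then obtain s where s: "s*s = 1 - 4*c" using sqrt_ex Fq_iff by blast
  have s0: "s \<noteq> 0" using s c(2) four_ne by (auto simp: field_simps)
  define y where "y = (1+s)/2"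
  have hy: "y*(1-y) = c" unfolding y_def using s two_ne four_ne by (simp add: field_simps) algebra
  have sq: "(s^q)*(s^q) = s*s" using s \<open>(1 - 4*c)^q = 1 - 4*c\<close> by (metis power_mult_distrib)
  hence "(s^q - s)*(s^q + s) = 0" by (simp add: algebra_simps)
  hence sc: "s^q = s \<or> s^q = -s" by (auto simp: eq_neg_iff_add_eq_0)
  have two: "(2::'a)^q = 2" using frob_of_nat[of 2] by simp
  have yq: "y^q = (1 + s^q)/2" unfolding y_def by (simp add: power_divide frob_add two)
  have yh: "y \<noteq> 1/2" unfolding y_def using s0 two_ne by (auto simp: field_simps)
  have "y^q = y \<or> y^q = 1 - y" using sc yq unfolding y_def using two_ne by (auto simp: field_simps)
  hence "y \<in> setS q" using yh by (auto simp: setS_def subfield_Fq_def setV_def)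
  thus ?thesis using hy by blast
qed

lemma g_F: assumes "y \<in> setS q" shows "gmap n y = R n (y*(1-(y::'a)))"
proof -
  have "y \<noteq> 1/2" using assms by (auto simp: setS_def)
  hence "2*y - 1 \<noteq> 0" using half_ne by simp
  thus ?thesis unfolding gmap_def using R_g[of n y] by (simp add: field_simps)
qed

lemma target: "of_nat n / 2^(n-1) = R n (1/4::'a)"
proof -
  have "R n (1/4::'a) * 2^n = 2 * of_nat n" by (rule R_quarter) (use four_ne in simp)
  show ?thesis
  proof (cases n)
    case 0 thus ?thesis by (simp add: R_0)
  next
    case (Suc m)
    have "R n (1/4::'a) * 2 * 2^m = 2 * of_nat n" using \<open>R n (1/4::'a) * 2^n = 2 * of_nat n\<close> Suc
      by (simp add: mult.assoc)
    hence "R n (1/4::'a) * 2^m = of_nat n" using two_ne by (simp add: mult.assoc)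
    moreover have "(2::'a)^m \<noteq> 0" using two_ne by simp
    ultimately show ?thesis using Suc by (simp add: divide_eq_eq)
  qed
qed


lemma main:
  "bij_betw (\<lambda>c::'a. rdickson3 n 1 c) (subfield_Fq q) (subfield_Fq q)
    \<longleftrightarrow> ((\<forall>z \<in> gmap n ` (setS q :: 'a set). card {y \<in> setS q. gmap n y = z} = 2)
         \<and> (\<forall>y \<in> (setS q :: 'a set). gmap n y \<noteq> of_nat n / 2 ^ (n - 1)))"
proof -
  define F where "F = (\<lambda>c::'a. R n c)"
  define Fq where "Fq = (subfield_Fq q :: 'a set)"
  define S where "S = (setS q :: 'a set)"
  define Q where "Q = (1/4 :: 'a)"
  define A where "A = Fq - {Q}"
  have rd: "(\<lambda>c::'a. rdickson3 n 1 c) = F" unfolding F_def by (simp add: rd_R)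
  have tg: "of_nat n / 2 ^ (n - 1) = F Q" unfolding F_def Q_def by (rule target)
  have gS: "\<And>y. y \<in> S \<Longrightarrow> gmap n y = F (y*(1-y))" unfolding S_def F_def by (rule g_F)
  have hA: "\<And>y. y \<in> S \<Longrightarrow> y*(1-y) \<in> A" unfolding S_def A_def Fq_def Q_def using S_h by blast
  have hsurj: "\<And>c. c \<in> A \<Longrightarrow> \<exists>y\<in>S. y*(1-y) = c" unfolding S_def A_def Fq_def Q_def using h_surj by blast
  have flip: "\<And>y. y \<in> S \<Longrightarrow> 1 - y \<in> S \<and> 1 - y \<noteq> y" unfolding S_def using S_flip by blast
  have QF: "Q \<in> Fq" unfolding Q_def Fq_def by (rule quarter_Fq)
  have FFq: "F ` Fq \<subseteq> Fq" unfolding F_def Fq_def by (auto simp: Fq_iff R_frob)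
  have finFq: "finite Fq" by simp
  have bij_iff: "bij_betw F Fq Fq \<longleftrightarrow> inj_on F Fq"
  proof
    assume "inj_on F Fq"
    moreover have "F ` Fq = Fq"
      using card_subset_eq[OF finFq FFq] card_image[OF \<open>inj_on F Fq\<close>] by simp
    ultimately show "bij_betw F Fq Fq" unfolding bij_betw_def by simp
  qed (simp add: bij_betw_imp_inj_on)
  have FqA: "Fq = insert Q A" unfolding A_def using QF by auto
  have inj_iff: "inj_on F Fq \<longleftrightarrow> inj_on F A \<and> (\<forall>c\<in>A. F c \<noteq> F Q)"
  proof -
    have QA: "Q \<notin> A" by (simp add: A_def)
    hence "A - {Q} = A" by simp
    have "(F Q \<notin> F ` A) \<longleftrightarrow> (\<forall>c\<in>A. F c \<noteq> F Q)"
    proof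
      assume "F Q \<notin> F ` A" thus "\<forall>c\<in>A. F c \<noteq> F Q" by (metis imageI)
    next
      assume "\<forall>c\<in>A. F c \<noteq> F Q" thus "F Q \<notin> F ` A" by auto
    qed
    thus ?thesis unfolding FqA inj_on_insert \<open>A - {Q} = A\<close> by simp
  qed
  have R2: "(\<forall>y \<in> S. gmap n y \<noteq> F Q) \<longleftrightarrow> (\<forall>c\<in>A. F c \<noteq> F Q)"
  proof
    assume H: "\<forall>y \<in> S. gmap n y \<noteq> F Q"
    show "\<forall>c\<in>A. F c \<noteq> F Q"
    proof
      fix c assume "c \<in> A"
      then obtain y where "y \<in> S" "y*(1-y) = c" using hsurj by blast
      thus "F c \<noteq> F Q" using H gS by auto
    qed
  next
    assume H: "\<forall>c\<in>A. F c \<noteq> F Q"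
    show "\<forall>y \<in> S. gmap n y \<noteq> F Q"
    proof
      fix y assume "y \<in> S" thus "gmap n y \<noteq> F Q" using H gS[OF \<open>y \<in> S\<close>] hA[OF \<open>y \<in> S\<close>] by auto
    qed
  qed
  have R1: "(\<forall>z \<in> gmap n ` S. card {y \<in> S. gmap n y = z} = 2) \<longleftrightarrow> inj_on F A"
  proof
    assume inj: "inj_on F A"
    show "\<forall>z \<in> gmap n ` S. card {y \<in> S. gmap n y = z} = 2"
    proof
      fix z assume "z \<in> gmap n ` S"
      then obtain y0 where y0: "y0 \<in> S" "z = gmap n y0" by blast
      have fl: "1 - y0 \<in> S" "1 - y0 \<noteq> y0" using flip[OF y0(1)] by auto
      have e: "(1-y0)*(1-(1-y0)) = y0*(1-y0)" by (simp add: algebra_simps)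
      have e': "(1-y0)*y0 = y0*(1-y0)" by (rule mult.commute)
      have g1: "gmap n (1-y0) = z" using gS[OF fl(1)] gS[OF y0(1)] y0(2) e' by simp
      have "{y \<in> S. gmap n y = z} = {y0, 1 - y0}"
      proof (intro equalityI subsetI)
        fix y assume "y \<in> {y \<in> S. gmap n y = z}"
        hence y: "y \<in> S" "F (y*(1-y)) = F (y0*(1-y0))"
          using y0 gS[of y] gS[OF y0(1)] by auto
        have "y*(1-y) = y0*(1-y0)" by (rule inj_onD[OF inj y(2) hA[OF y(1)] hA[OF y0(1)]])
        hence "y = y0 \<or> y = 1 - y0" using h_eq[of y0 y] by auto
        thus "y \<in> {y0, 1 - y0}" by blast
      next
        fix y assume "y \<in> {y0, 1 - y0}"
        hence "y = y0 \<or> y = 1 - y0" by blast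
        thus "y \<in> {y \<in> S. gmap n y = z}" using y0 fl(1) g1 by blast
      qed
      moreover have "card {y0, 1 - y0} = 2" using fl(2) by simp
      ultimately show "card {y \<in> S. gmap n y = z} = 2" by simp
    qed
  next
    assume H: "\<forall>z \<in> gmap n ` S. card {y \<in> S. gmap n y = z} = 2"
    show "inj_on F A"
    proof (rule inj_onI, rule ccontr)
      fix c c' assume c: "c \<in> A" "c' \<in> A" "F c = F c'" "c \<noteq> c'"
      obtain y where y: "y \<in> S" "y*(1-y) = c" using hsurj c(1) by blast
      obtain y' where y': "y' \<in> S" "y'*(1-y') = c'" using hsurj c(2) by blast
      have fl: "1 - y \<in> S" "1 - y \<noteq> y" using flip[OF y(1)] by auto
      have fl': "1 - y' \<in> S" "1 - y' \<noteq> y'" using flip[OF y'(1)] by auto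
      have e1: "(1-y)*(1-(1-y)) = c" using y(2) by (simp add: algebra_simps)
      have e2: "(1-y')*(1-(1-y')) = c'" using y'(2) by (simp add: algebra_simps)
      define z where "z = gmap n y"
      have z: "z \<in> gmap n ` S" unfolding z_def using y by blast
      have zc: "z = F c" unfolding z_def using gS[OF y(1)] y(2) by simp
      have g1: "gmap n (1-y) = z" using gS[OF fl(1)] e1 zc by simp
      have g2: "gmap n y' = z" using gS[OF y'(1)] y'(2) zc c(3) by simp
      have g3: "gmap n (1-y') = z" using gS[OF fl'(1)] e2 zc c(3) by simp
      have sub: "{y, 1-y, y', 1-y'} \<subseteq> {y \<in> S. gmap n y = z}"
        using y(1) fl(1) y'(1) fl'(1) g1 g2 g3 z_def by auto
      have neq: "\<And>a b. a*(1-a) \<noteq> b*(1-b) \<Longrightarrow> a \<noteq> (b::'a)" by auto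
      have e1n: "(1-y)*y = c" using y(2) by (simp add: mult.commute)
      have e2n: "(1-y')*y' = c'" using y'(2) by (simp add: mult.commute)
      have d2: "y \<noteq> y'" "y \<noteq> 1 - y'" "1 - y \<noteq> y'" "1 - y \<noteq> 1 - y'"
        by (rule neq; simp add: y(2) y'(2) e1n e2n c(4))+
      have "card {y, 1-y, y', 1-y'} = 4" using fl(2) fl'(2) d2 by auto
      moreover have "card {y, 1-y, y', 1-y'} \<le> card {y \<in> S. gmap n y = z}"
        by (rule card_mono) (use sub in auto)
      ultimately show False using H z by auto
    qed
  qed
  have "bij_betw F Fq Fq \<longleftrightarrow> ((\<forall>z \<in> gmap n ` S. card {y \<in> S. gmap n y = z} = 2) \<and> (\<forall>y \<in> S. gmap n y \<noteq> F Q))"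
    unfolding bij_iff inj_iff R1 R2 ..
  thus ?thesis unfolding rd tg S_def Fq_def .
qed

end

theorem theorem2p10:
  fixes p q k n :: nat
  assumes "prime p" and "odd p" and "k \<ge> 1" and "q = p ^ k"
    and "card (UNIV::'a::{field,finite} set) = q ^ 2"
  shows "bij_betw (\<lambda>c::'a. rdickson3 n 1 c) (subfield_Fq q) (subfield_Fq q)
    \<longleftrightarrow> ((\<forall>z \<in> gmap n ` (setS q :: 'a set). card {y \<in> setS q. gmap n y = z} = 2)
         \<and> (\<forall>y \<in> (setS q :: 'a set). gmap n y \<noteq> of_nat n / 2 ^ (n - 1)))"
  by (rule main[OF assms])

end
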